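(* Let $r,n\ge 1$ be integers and let $\Gamma=W(\mathcal K_r)\cong(\mathbb Z/2\mathbb Z)^r$, where $\mathcal K_r$ is the complete graph on $r$ vertices. Then \[ h_n(\Gamma)\le 4^{rn}\cdot n^r\cdot n^{(1-2^{-r})n}. \]
   Context: $W(\mathcal G)$ denotes the right-angled Coxeter group of a graph $\mathcal G$: generators $\sigma_v$ for the vertices, relations $\sigma_v^2=1$, and $\sigma_v\sigma_w=\sigma_w\sigma_v$ for adjacent $v,w$. For a group $\Gamma$, $h_n(\Gamma)=|\mathrm{Hom}(\Gamma,\mathrm{Sym}_n)|$ is the number of homomorphisms from $\Gamma$ to the symmetric group on $\{1,\dots,n\}$. *)

theory Defs
  imports "HOL-Combinatorics.Permutations" Complex_Main
begin

text \<open>Right-angled Coxeter group W(G) of a graph G on vertex set {0..<r} with symmetric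
  irreflexive adjacency E. By the universal property of the presentation, homomorphisms
  W(G) -> Sym_n correspond bijectively to assignments of the generators sigma_v (v < r) to
  permutations of {1..n} satisfying the defining relations. We count those assignments
  (functions are fixed to id outside {0..<r} so that the set is finite and the
  correspondence is bijective).\<close>

definition racg_hom_count :: "nat \<Rightarrow> (nat \<Rightarrow> nat \<Rightarrow> bool) \<Rightarrow> nat \<Rightarrow> nat" where
  "racg_hom_count r E n = card {s :: nat \<Rightarrow> nat \<Rightarrow> nat.
      (\<forall>v<r. s v permutes {1..n}) \<and>
      (\<forall>v<r. s v \<circ> s v = id) \<and>
      (\<forall>v<r. \<forall>w<r. E v w \<longrightarrow> s v \<circ> s w = s w \<circ> s v) \<and>
      (\<forall>v\<ge>r. s v = id)}"

definition complete_graph_adj :: "nat \<Rightarrow> nat \<Rightarrow> bool" where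
  "complete_graph_adj v w \<longleftrightarrow> v \<noteq> w"

end

theory Submission
  imports Defs "HOL-Library.FuncSet"
begin

primrec wrd :: "(nat \<Rightarrow> nat \<Rightarrow> nat) \<Rightarrow> nat list \<Rightarrow> nat \<Rightarrow> nat" where
  "wrd s [] = id"
| "wrd s (v # l) = s v \<circ> wrd s l"

definition good :: "nat set \<Rightarrow> (nat \<Rightarrow> nat \<Rightarrow> nat) \<Rightarrow> nat \<Rightarrow> bool" where
  "good S s j \<longleftrightarrow> (\<forall>v<j. s v permutes S) \<and> (\<forall>v<j. s v \<circ> s v = id) \<and>
     (\<forall>v<j. \<forall>w<j. v \<noteq> w \<longrightarrow> s v \<circ> s w = s w \<circ> s v)"

definition orb :: "(nat \<Rightarrow> nat \<Rightarrow> nat) \<Rightarrow> nat \<Rightarrow> nat \<Rightarrow> nat set" where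
  "orb s j x = {wrd s l x | l. set l \<subseteq> {..<j}}"

lemma wrd_append: "wrd s (a @ b) = wrd s a \<circ> wrd s b"
  by (induction a) auto

lemma wrd_upd: "set l \<subseteq> {..<j} \<Longrightarrow> wrd (s(j := t)) l = wrd s l"
  by (induction l) auto

lemma wrd_rev: assumes "good S s j" "set l \<subseteq> {..<j}"
  shows "wrd s (rev l) (wrd s l x) = x"
  using assms(2)
proof (induction l arbitrary: x)
  case Nil then show ?case by simp
next
  case (Cons v l)
  have "s v (s v y) = y" for y using assms(1) Cons.prems unfolding good_def
    by (metis comp_apply id_apply insert_subset lessThan_iff list.simps(15))
  then show ?case using Cons by (simp add: wrd_append)
qed

lemma wrd_comm: assumes "\<And>v. v \<in> set l \<Longrightarrow> t \<circ> s v = s v \<circ> t"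
  shows "t (wrd s l x) = wrd s l (t x)"
  using assms
proof (induction l)
  case Nil then show ?case by simp
next
  case (Cons v l)
  then show ?case by (simp add: fun_eq_iff)
qed

lemma wrd_in: assumes "good S s j" "set l \<subseteq> {..<j}" "x \<in> S"
  shows "wrd s l x \<in> S"
  using assms(2)
proof (induction l)
  case Nil then show ?case using assms by simp
next
  case (Cons v l)
  then show ?case using assms(1) unfolding good_def by (auto simp: permutes_in_image)
qed

lemma orb_self: "x \<in> orb s j x"
  unfolding orb_def by (rule CollectI, rule exI[of _ "[]"]) simp

lemma orb_sub: "good S s j \<Longrightarrow> x \<in> S \<Longrightarrow> orb s j x \<subseteq> S"
  unfolding orb_def using wrd_in by blast

lemma orb_sym: assumes "good S s j" "y \<in> orb s j x" shows "x \<in> orb s j y"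
proof -
  obtain l where l: "set l \<subseteq> {..<j}" "y = wrd s l x" using assms(2) unfolding orb_def by blast
  then have "x = wrd s (rev l) y" using wrd_rev[OF assms(1)] by simp
  then show ?thesis unfolding orb_def using l by force
qed

lemma orb_trans: assumes "y \<in> orb s j x" "z \<in> orb s j y" shows "z \<in> orb s j x"
proof -
  obtain l where l: "set l \<subseteq> {..<j}" "y = wrd s l x" using assms(1) unfolding orb_def by blast
  obtain m where m: "set m \<subseteq> {..<j}" "z = wrd s m y" using assms(2) unfolding orb_def by blast
  have "z = wrd s (m @ l) x" using l m by (simp add: wrd_append)
  moreover have "set (m @ l) \<subseteq> {..<j}" using l m by auto
  ultimately show ?thesis unfolding orb_def by blast
qed

lemma orb_eq: "good S s j \<Longrightarrow> y \<in> orb s j x \<Longrightarrow> orb s j y = orb s j x"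
  by (meson orb_sym orb_trans subsetI subset_antisym)

lemma orb_upd: "orb (s(j := t)) j = orb s j"
proof -
  have "{wrd (s(j := t)) l x | l. set l \<subseteq> {..<j}} = {wrd s l x | l. set l \<subseteq> {..<j}}" for x
    using wrd_upd[of _ j s t] by metis
  then show ?thesis unfolding orb_def by (simp add: fun_eq_iff)
qed

lemma orb_mono: "orb s j x \<subseteq> orb s (Suc j) x"
proof
  fix y assume "y \<in> orb s j x"
  then obtain l where l: "set l \<subseteq> {..<j}" "y = wrd s l x" unfolding orb_def by blast
  moreover have "set l \<subseteq> {..<Suc j}" using l by auto
  ultimately show "y \<in> orb s (Suc j) x" unfolding orb_def by blast
qed

lemma orb_step: "y \<in> orb s j x \<Longrightarrow> s j y \<in> orb s (Suc j) x"
proof -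
  assume "y \<in> orb s j x"
  then obtain l where l: "set l \<subseteq> {..<j}" "y = wrd s l x" unfolding orb_def by blast
  have "s j y = wrd s (j # l) x" using l by simp
  moreover have "set (j # l) \<subseteq> {..<Suc j}" using l by auto
  ultimately show ?thesis unfolding orb_def by blast
qed

lemma orb_step2: "y \<in> orb s j (s j x) \<Longrightarrow> y \<in> orb s (Suc j) x"
proof -
  assume "y \<in> orb s j (s j x)"
  then obtain l where l: "set l \<subseteq> {..<j}" "y = wrd s l (s j x)" unfolding orb_def by blast
  have "y = wrd s (l @ [j]) x" using l by (simp add: wrd_append)
  moreover have "set (l @ [j]) \<subseteq> {..<Suc j}" using l by auto
  ultimately show ?thesis unfolding orb_def by blast
qed

lemma good_mono: "good S s (Suc j) \<Longrightarrow> good S s j"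
  unfolding good_def by auto

lemma wrd_split: assumes "good S s (Suc j)" "set l \<subseteq> {..<Suc j}"
  shows "\<exists>l'. set l' \<subseteq> {..<j} \<and> (wrd s l x = wrd s l' x \<or> wrd s l x = s j (wrd s l' x))"
  using assms(2)
proof (induction l)
  case Nil then show ?case by (auto intro: exI[of _ "[]"])
next
  case (Cons v l)
  then obtain l' where l': "set l' \<subseteq> {..<j}" "wrd s l x = wrd s l' x \<or> wrd s l x = s j (wrd s l' x)"
    by auto
  have inv: "s j (s j y) = y" for y using assms(1) unfolding good_def
    by (metis comp_apply id_apply lessI)
  show ?case
  proof (cases "v = j")
    case True
    then show ?thesis using l' inv by auto
  next
    case False
    then have vj: "v < j" using Cons.prems by auto
    have cm: "s v (s j y) = s j (s v y)" for y using assms(1) False vj unfolding good_def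
      by (metis comp_apply less_SucI lessI)
    show ?thesis
      using l' vj cm by (intro exI[of _ "v # l'"]) auto
  qed
qed

lemma orb_card: assumes "good S s j" "finite S" "x \<in> S"
  shows "card (orb s j x) \<le> 2 ^ j"
  using assms(1)
proof (induction j)
  case 0
  have "orb s 0 x = {x}" unfolding orb_def by auto
  then show ?case by simp
next
  case (Suc j)
  have g: "good S s j" using Suc.prems good_mono by blast
  have sub: "orb s (Suc j) x \<subseteq> orb s j x \<union> s j ` orb s j x"
  proof
    fix y assume "y \<in> orb s (Suc j) x"
    then obtain l where l: "set l \<subseteq> {..<Suc j}" "y = wrd s l x" unfolding orb_def by blast
    from wrd_split[OF Suc.prems l(1)] obtain l' where
      "set l' \<subseteq> {..<j}" "wrd s l x = wrd s l' x \<or> wrd s l x = s j (wrd s l' x)" by blast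
    then show "y \<in> orb s j x \<union> s j ` orb s j x" using l unfolding orb_def by blast
  qed
  have fin: "finite (orb s j x)" using orb_sub[OF g assms(3)] assms(2) finite_subset by blast
  have "card (orb s (Suc j) x) \<le> card (orb s j x \<union> s j ` orb s j x)"
    by (rule card_mono) (use fin sub in auto)
  also have "\<dots> \<le> card (orb s j x) + card (s j ` orb s j x)" by (rule card_Un_le)
  also have "\<dots> \<le> 2 * card (orb s j x)" using card_image_le[OF fin, of "s j"] by simp
  also have "\<dots> \<le> 2 ^ Suc j" using Suc.IH[OF g] by simp
  finally show ?case .
qed


definition reps :: "nat set \<Rightarrow> (nat \<Rightarrow> nat \<Rightarrow> nat) \<Rightarrow> nat \<Rightarrow> nat set" where
  "reps S s j = {x\<in>S. \<forall>y\<in>orb s j x. x \<le> y}"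

definition Tset :: "nat set \<Rightarrow> (nat \<Rightarrow> nat \<Rightarrow> nat) \<Rightarrow> nat \<Rightarrow> (nat \<Rightarrow> nat) set" where
  "Tset S s j = {t. t permutes S \<and> t \<circ> t = id \<and> (\<forall>v<j. t \<circ> s v = s v \<circ> t)}"

definition bw :: "(nat \<Rightarrow> nat \<Rightarrow> nat) \<Rightarrow> nat \<Rightarrow> (nat \<Rightarrow> nat) \<Rightarrow> nat \<Rightarrow> bool" where
  "bw s j t b \<longleftrightarrow> (\<exists>y\<in>orb s j (t b). y < b)"

definition enc :: "nat set \<Rightarrow> (nat \<Rightarrow> nat \<Rightarrow> nat) \<Rightarrow> nat \<Rightarrow> (nat \<Rightarrow> nat) \<Rightarrow> nat \<Rightarrow> nat option" where
  "enc S s j t = (\<lambda>b. if b \<in> reps S s j then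
      (if t b \<notin> orb s j b \<and> \<not> bw s j t b then None else Some (t b)) else undefined)"

lemma rep_exists: assumes "good S s j" "finite S" "x \<in> S"
  shows "\<exists>b\<in>reps S s j. x \<in> orb s j b"
proof -
  have sub: "orb s j x \<subseteq> S" using orb_sub[OF assms(1,3)] .
  have fin: "finite (orb s j x)" using sub assms(2) finite_subset by blast
  define b where "b = Min (orb s j x)"
  have bin: "b \<in> orb s j x" unfolding b_def using fin orb_self[of x s j] by (auto intro: Min_in)
  have eq: "orb s j b = orb s j x" using orb_eq[OF assms(1) bin] .
  have bS: "b \<in> S" using bin sub by blast
  have "\<forall>y\<in>orb s j b. b \<le> y"
  proof
    fix y assume "y \<in> orb s j b"
    then have "y \<in> orb s j x" using eq by simp
    then show "b \<le> y" unfolding b_def by (rule Min_le[OF fin])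
  qed
  then have "b \<in> reps S s j" unfolding reps_def using bS by blast
  moreover have "x \<in> orb s j b" using eq orb_self by metis
  ultimately show ?thesis by blast
qed

lemma reps_disj: assumes "good S s j" "b1 \<in> reps S s j" "b2 \<in> reps S s j"
  "z \<in> orb s j b1" "z \<in> orb s j b2" shows "b1 = b2"
proof -
  have "orb s j b1 = orb s j b2" using orb_eq[OF assms(1) assms(4)] orb_eq[OF assms(1) assms(5)] by simp
  then have "b1 \<in> orb s j b2" "b2 \<in> orb s j b1" using orb_self by metis+
  then have "b2 \<le> b1" "b1 \<le> b2" using assms(2,3) unfolding reps_def by blast+
  then show ?thesis by simp
qed

lemma T_wrd: assumes "t \<in> Tset S s j" "set l \<subseteq> {..<j}"
  shows "t (wrd s l x) = wrd s l (t x)"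
  by (rule wrd_comm) (use assms in \<open>auto simp: Tset_def\<close>)

lemma T_orb: assumes "t \<in> Tset S s j" "y \<in> orb s j x" shows "t y \<in> orb s j (t x)"
proof -
  obtain l where l: "set l \<subseteq> {..<j}" "y = wrd s l x" using assms(2) unfolding orb_def by blast
  then have "t y = wrd s l (t x)" using T_wrd[OF assms(1)] by simp
  then show ?thesis using l unfolding orb_def by blast
qed

lemma T_inv: "t \<in> Tset S s j \<Longrightarrow> t (t x) = x"
proof -
  assume "t \<in> Tset S s j"
  then have "t \<circ> t = id" unfolding Tset_def by blast
  then have "(t \<circ> t) x = id x" by simp
  then show ?thesis by simp
qed

lemma T_S: "t \<in> Tset S s j \<Longrightarrow> x \<in> S \<Longrightarrow> t x \<in> S"
  unfolding Tset_def by (auto simp: permutes_in_image)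

lemma enc_inj: assumes g: "good S s j" and fS: "finite S"
  and t1: "t1 \<in> Tset S s j" and t2: "t2 \<in> Tset S s j" and c: "enc S s j t1 = enc S s j t2"
  shows "t1 = t2"
proof -
  let ?R = "reps S s j" and ?O = "orb s j"
  have cb: "enc S s j t1 b = enc S s j t2 b" for b using c by simp
  have onR: "t1 b = t2 b" if bR: "b \<in> ?R" for b
  proof (cases "enc S s j t1 b")
    case (Some y)
    then have "t1 b = y" using bR unfolding enc_def by (auto split: if_splits)
    moreover have "t2 b = y" using Some cb[of b] bR unfolding enc_def by (auto split: if_splits)
    ultimately show ?thesis by simp
  next
    case None
    then have fw: "t1 b \<notin> ?O b" "\<not> bw s j t1 b" using bR unfolding enc_def by (auto split: if_splits)
    have bS: "b \<in> S" using bR unfolding reps_def by auto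
    define y1 where "y1 = t1 b"
    have y1S: "y1 \<in> S" using T_S[OF t1 bS] y1_def by simp
    obtain b1 where b1R: "b1 \<in> ?R" and y1b1: "y1 \<in> ?O b1" using rep_exists[OF g fS y1S] by blast
    have b1y1: "b1 \<in> ?O y1" using orb_sym[OF g y1b1] .
    obtain w where w: "set w \<subseteq> {..<j}" "b1 = wrd s w y1" using b1y1 unfolding orb_def by blast
    have t1b1: "t1 b1 = wrd s w b" using T_wrd[OF t1 w(1)] w(2) y1_def T_inv[OF t1] by simp
    have "t1 b1 \<in> ?O b" using t1b1 w(1) unfolding orb_def by blast
    then have bin: "b \<in> ?O (t1 b1)" using orb_sym[OF g] by blast
    have "\<not> b1 < b" using fw(2) b1y1 unfolding bw_def y1_def by blast
    then have "b \<le> b1" by simp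
    moreover have "b \<noteq> b1"
    proof
      assume "b = b1"
      then have "y1 \<in> ?O b" using y1b1 by simp
      then show False using fw(1) y1_def by simp
    qed
    ultimately have "b < b1" by simp
    then have "bw s j t1 b1" unfolding bw_def using bin by blast
    then have "enc S s j t1 b1 = Some (t1 b1)" using b1R unfolding enc_def by simp
    then have "enc S s j t2 b1 = Some (t1 b1)" using cb by simp
    then have t2b1: "t2 b1 = t1 b1" using b1R unfolding enc_def by (auto split: if_splits)
    have e1: "wrd s w (t1 b) = b1" using w(2) y1_def by simp
    have "wrd s w (t2 b) = t2 (wrd s w b)" using T_wrd[OF t2 w(1)] by simp
    also have "\<dots> = t2 (t2 b1)" using t2b1 t1b1 by simp
    also have "\<dots> = b1" using T_inv[OF t2] by simp
    finally have "wrd s w (t1 b) = wrd s w (t2 b)" using e1 by simp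
    then have "wrd s (rev w) (wrd s w (t1 b)) = wrd s (rev w) (wrd s w (t2 b))" by simp
    then show ?thesis using wrd_rev[OF g w(1)] by simp
  qed
  show ?thesis
  proof
    fix x
    show "t1 x = t2 x"
    proof (cases "x \<in> S")
      case True
      obtain b where bR: "b \<in> ?R" and xb: "x \<in> ?O b" using rep_exists[OF g fS True] by blast
      obtain w where w: "set w \<subseteq> {..<j}" "x = wrd s w b" using xb unfolding orb_def by blast
      show ?thesis using T_wrd[OF t1 w(1)] T_wrd[OF t2 w(1)] onR[OF bR] w(2) by simp
    next
      case False
      have "t1 permutes S" "t2 permutes S" using t1 t2 unfolding Tset_def by auto
      then show ?thesis using False by (metis permutes_not_in)
    qed
  qed
qed

lemma reps_sub: assumes g: "good S s j" and t: "t \<in> Tset S s j"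
  shows "reps S (s(j := t)) (Suc j) \<subseteq> {b \<in> reps S s j. \<not> bw s j t b}"
proof
  fix x assume x: "x \<in> reps S (s(j := t)) (Suc j)"
  let ?s = "s(j := t)"
  have A: "orb s j x \<subseteq> orb ?s (Suc j) x" using orb_mono[of ?s j x] orb_upd[of s j t] by simp
  have B: "orb s j (t x) \<subseteq> orb ?s (Suc j) x"
    using orb_step2[of _ ?s j x] orb_upd[of s j t] by auto
  have xS: "x \<in> S" and mn: "\<And>y. y \<in> orb ?s (Suc j) x \<Longrightarrow> x \<le> y"
    using x unfolding reps_def by auto
  have "x \<in> reps S s j" unfolding reps_def using xS mn A by blast
  moreover have "\<not> bw s j t x" unfolding bw_def using mn B by (meson not_le subsetD)
  ultimately show "x \<in> {b \<in> reps S s j. \<not> bw s j t b}" by blast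
qed


lemma two_plus_le_four_pow: "k \<ge> 1 \<Longrightarrow> 2 + k \<le> (4::nat) ^ k"
proof (induction k)
  case 0 then show ?case by simp
next
  case (Suc k)
  show ?case
  proof (cases "k = 0")
    case True then show ?thesis by simp
  next
    case False
    then have "2 + k \<le> 4 ^ k" using Suc by simp
    then show ?thesis by simp
  qed
qed

lemma prod_if_const: "finite A \<Longrightarrow> (\<Prod>b\<in>A. if P b then 1 else (c::nat)) = c ^ card {b\<in>A. \<not> P b}"
proof -
  assume fA: "finite A"
  have "(\<Prod>b\<in>A. if P b then 1 else c) = (\<Prod>b\<in>{b\<in>A. \<not> P b}. c)"
    using fA by (rule prod.mono_neutral_cong_right) auto
  then show ?thesis by simp
qed

lemma sum_orb_card: assumes g: "good S s j" and fS: "finite S"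
  shows "(\<Sum>b\<in>reps S s j. card (orb s j b)) \<le> card S"
proof -
  have fR: "finite (reps S s j)" using fS unfolding reps_def by auto
  have "(\<Sum>b\<in>reps S s j. card (orb s j b)) = card (\<Union>b\<in>reps S s j. orb s j b)"
  proof (rule card_UN_disjoint[symmetric])
    show "finite (reps S s j)" by (rule fR)
    show "\<forall>i\<in>reps S s j. finite (orb s j i)"
      using orb_sub[OF g] fS finite_subset unfolding reps_def by blast
    show "\<forall>i\<in>reps S s j. \<forall>k\<in>reps S s j. i \<noteq> k \<longrightarrow> orb s j i \<inter> orb s j k = {}"
      using reps_disj[OF g] by blast
  qed
  also have "\<dots> \<le> card S"
    by (rule card_mono[OF fS]) (use orb_sub[OF g] in \<open>auto simp: reps_def\<close>)
  finally show ?thesis .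
qed

lemma fiber_sum:
  assumes g: "good S s j" and fS: "finite S" and n: "card S = n" and n1: "n \<ge> 1"
  shows "(\<Sum>t\<in>Tset S s j. n ^ card (reps S (s(j := t)) (Suc j)))
          \<le> 4 ^ n * n ^ card (reps S s j)"
proof -
  let ?R = "reps S s j" and ?O = "orb s j" and ?T = "Tset S s j"
  let ?B = "\<lambda>b::nat. insert None (Some ` S)"
  define wt where "wt b z = (case z of None \<Rightarrow> n | Some y \<Rightarrow> if y \<in> ?O b then n else 1)" for b z
  define W where "W c = (\<Prod>b\<in>?R. wt b (c b))" for c
  have fR: "finite ?R" using fS unfolding reps_def by auto
  have fT: "finite ?T"
  proof (rule finite_subset[OF _ finite_permutations[OF fS]])
    show "?T \<subseteq> {p. p permutes S}" unfolding Tset_def by blast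
  qed
  have step1: "n ^ card (reps S (s(j := t)) (Suc j)) \<le> W (enc S s j t)" if t: "t \<in> ?T" for t
  proof -
    have "wt b (enc S s j t b) = (if bw s j t b then 1 else n)" if bR: "b \<in> ?R" for b
    proof -
      have bwn: "t b \<notin> ?O b" if bwb: "bw s j t b"
      proof
        assume tb: "t b \<in> ?O b"
        obtain y where y: "y \<in> ?O (t b)" "y < b" using bwb unfolding bw_def by blast
        have "?O (t b) = ?O b" by (rule orb_eq[OF g tb])
        then have "y \<in> ?O b" using y(1) by simp
        then have "b \<le> y" using bR unfolding reps_def by blast
        then show False using y(2) by simp
      qed
      show ?thesis
      proof (cases "t b \<notin> ?O b \<and> \<not> bw s j t b")
        case True
        then have "enc S s j t b = None" using bR unfolding enc_def by simp
        then show ?thesis using True unfolding wt_def by simp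
      next
        case False
        then have "enc S s j t b = Some (t b)" using bR unfolding enc_def by simp
        then show ?thesis using False bwn unfolding wt_def by auto
      qed
    qed
    then have "W (enc S s j t) = (\<Prod>b\<in>?R. if bw s j t b then 1 else n)"
      unfolding W_def by (rule prod.cong[OF refl])
    also have "\<dots> = n ^ card {b\<in>?R. \<not> bw s j t b}" by (rule prod_if_const[OF fR])
    finally have eq: "W (enc S s j t) = n ^ card {b\<in>?R. \<not> bw s j t b}" .
    have "card (reps S (s(j := t)) (Suc j)) \<le> card {b\<in>?R. \<not> bw s j t b}"
      by (rule card_mono) (use fR reps_sub[OF g t] in auto)
    then show ?thesis unfolding eq by (rule power_increasing) (use n1 in simp)
  qed
  have inj: "inj_on (enc S s j) ?T" using enc_inj[OF g fS] by (meson inj_onI)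
  have img: "enc S s j ` ?T \<subseteq> PiE ?R ?B"
  proof
    fix c assume "c \<in> enc S s j ` ?T"
    then obtain t where t: "t \<in> ?T" and c: "c = enc S s j t" by blast
    have "c b \<in> ?B b" if "b \<in> ?R" for b
      using that T_S[OF t] unfolding c enc_def reps_def by auto
    moreover have "c \<in> extensional ?R" unfolding c enc_def extensional_def by auto
    ultimately show "c \<in> PiE ?R ?B" by (simp add: PiE_iff)
  qed
  have fP: "finite (PiE ?R ?B)" using fR fS by (intro finite_PiE) auto
  have "(\<Sum>t\<in>?T. n ^ card (reps S (s(j := t)) (Suc j))) \<le> (\<Sum>t\<in>?T. W (enc S s j t))"
    by (rule sum_mono) (rule step1)
  also have "\<dots> = (\<Sum>c\<in>enc S s j ` ?T. W c)" using sum.reindex[OF inj, of W] by (simp add: comp_def)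
  also have "\<dots> \<le> (\<Sum>c\<in>PiE ?R ?B. W c)" by (rule sum_mono2[OF fP img]) simp
  also have "\<dots> = (\<Prod>b\<in>?R. \<Sum>z\<in>?B b. wt b z)"
    unfolding W_def by (rule prod_sum_PiE[symmetric]) (use fR fS in auto)
  also have "\<dots> \<le> (\<Prod>b\<in>?R. n * 4 ^ card (?O b))"
  proof (rule prod_mono, rule conjI)
    fix b assume bR: "b \<in> ?R"
    show "0 \<le> (\<Sum>z\<in>?B b. wt b z)" by simp
    have bS: "b \<in> S" using bR unfolding reps_def by auto
    have Osub: "?O b \<subseteq> S" using orb_sub[OF g bS] .
    have fO: "finite (?O b)" using Osub fS finite_subset by blast
    have c1: "card (?O b) \<ge> 1" using fO orb_self[of b s j]
      by (metis One_nat_def Suc_leI card_gt_0_iff empty_iff)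
    have "(\<Sum>z\<in>?B b. wt b z) = n + (\<Sum>y\<in>S. wt b (Some y))"
      by (subst sum.insert) (auto simp: fS wt_def sum.reindex inj_on_def)
    also have "(\<Sum>y\<in>S. wt b (Some y)) \<le> (\<Sum>y\<in>S. (if y \<in> ?O b then n else 0) + 1)"
      by (rule sum_mono) (auto simp: wt_def)
    also have "\<dots> = (\<Sum>y\<in>S. if y \<in> ?O b then n else 0) + n"
      unfolding sum.distrib using n by simp
    also have "(\<Sum>y\<in>S. if y \<in> ?O b then n else 0) = n * card (?O b)"
    proof -
      have "(\<Sum>y\<in>S. if y \<in> ?O b then n else 0) = (\<Sum>y\<in>?O b. n)"
        using fS Osub by (intro sum.mono_neutral_cong_right) auto
      then show ?thesis by simp
    qed
    finally have "(\<Sum>z\<in>?B b. wt b z) \<le> n * (2 + card (?O b))" by (simp add: algebra_simps)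
    also have "\<dots> \<le> n * 4 ^ card (?O b)" using two_plus_le_four_pow[OF c1] by (rule mult_le_mono2)
    finally show "(\<Sum>z\<in>?B b. wt b z) \<le> n * 4 ^ card (?O b)" .
  qed
  also have "\<dots> = n ^ card ?R * 4 ^ (\<Sum>b\<in>?R. card (?O b))"
    by (simp add: prod.distrib power_sum)
  also have "\<dots> \<le> n ^ card ?R * 4 ^ n"
    using sum_orb_card[OF g fS] n by (simp add: power_increasing)
  finally show ?thesis by (simp add: mult.commute)
qed


definition Vset :: "nat set \<Rightarrow> nat \<Rightarrow> (nat \<Rightarrow> nat \<Rightarrow> nat) set" where
  "Vset S j = {s. good S s j \<and> (\<forall>v\<ge>j. s v = id)}"

lemma V_finite: assumes fS: "finite S" shows "finite (Vset S j)"
proof -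
  have inj: "inj_on (\<lambda>s. restrict s {..<j}) (Vset S j)"
  proof (rule inj_onI)
    fix s1 s2 assume s1: "s1 \<in> Vset S j" and s2: "s2 \<in> Vset S j"
      and e: "restrict s1 {..<j} = restrict s2 {..<j}"
    show "s1 = s2"
    proof
      fix v show "s1 v = s2 v"
      proof (cases "v < j")
        case True
        then show ?thesis using fun_cong[OF e, of v] by simp
      next
        case False
        then show ?thesis using s1 s2 unfolding Vset_def by simp
      qed
    qed
  qed
  have "(\<lambda>s. restrict s {..<j}) ` Vset S j \<subseteq> PiE {..<j} (\<lambda>_. {p. p permutes S})"
    unfolding Vset_def good_def by auto
  moreover have "finite (PiE {..<j} (\<lambda>_. {p. p permutes S}))"
    by (rule finite_PiE) (auto simp: finite_permutations[OF fS])
  ultimately have "finite ((\<lambda>s. restrict s {..<j}) ` Vset S j)" by (rule finite_subset)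
  then show ?thesis using inj by (rule finite_imageD)
qed

lemma V_zero: "Vset S 0 = {\<lambda>_. id}"
  unfolding Vset_def good_def by auto

lemma reps_zero: "reps S s 0 = S"
proof -
  have "orb s 0 x = {x}" for x
  proof -
    have "set l \<subseteq> {..<0} \<Longrightarrow> l = []" for l :: "nat list" by auto
    then show ?thesis unfolding orb_def by auto
  qed
  then show ?thesis unfolding reps_def by auto
qed

lemma V_Suc: "Vset S (Suc j) = (\<lambda>(s, t). s(j := t)) ` Sigma (Vset S j) (\<lambda>s. Tset S s j)"
proof
  show "Vset S (Suc j) \<subseteq> (\<lambda>(s, t). s(j := t)) ` Sigma (Vset S j) (\<lambda>s. Tset S s j)"
  proof
    fix s' assume s': "s' \<in> Vset S (Suc j)"
    define s where "s = s'(j := id)"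
    have g: "good S s' (Suc j)" and idv: "\<forall>v\<ge>Suc j. s' v = id" using s' unfolding Vset_def by auto
    have "s \<in> Vset S j"
      unfolding Vset_def good_def s_def using g idv unfolding good_def
      by (auto simp: less_Suc_eq)
    moreover have "s' j \<in> Tset S s j"
      unfolding Tset_def s_def using g unfolding good_def by auto
    moreover have "s' = s(j := s' j)" unfolding s_def by simp
    ultimately show "s' \<in> (\<lambda>(s, t). s(j := t)) ` Sigma (Vset S j) (\<lambda>s. Tset S s j)"
      by (intro image_eqI[of _ _ "(s, s' j)"]) auto
  qed
next
  show "(\<lambda>(s, t). s(j := t)) ` Sigma (Vset S j) (\<lambda>s. Tset S s j) \<subseteq> Vset S (Suc j)"
  proof
    fix s' assume "s' \<in> (\<lambda>(s, t). s(j := t)) ` Sigma (Vset S j) (\<lambda>s. Tset S s j)"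
    then obtain s t where s: "s \<in> Vset S j" and t: "t \<in> Tset S s j" and e: "s' = s(j := t)" by auto
    have g: "good S s j" and idv: "\<forall>v\<ge>j. s v = id" using s unfolding Vset_def by auto
    have tp: "t permutes S" "t \<circ> t = id" "\<forall>v<j. t \<circ> s v = s v \<circ> t" using t unfolding Tset_def by auto
    have "good S s' (Suc j)"
      unfolding good_def e using g tp unfolding good_def
      by (auto simp: less_Suc_eq)
    moreover have "\<forall>v\<ge>Suc j. s' v = id" using idv e by auto
    ultimately show "s' \<in> Vset S (Suc j)" unfolding Vset_def by auto
  qed
qed

lemma V_inj: "inj_on (\<lambda>(s, t). s(j := t)) (Sigma (Vset S j) (\<lambda>s. Tset S s j))"
proof (rule inj_onI)
  fix p q assume p: "p \<in> Sigma (Vset S j) (\<lambda>s. Tset S s j)" and q: "q \<in> Sigma (Vset S j) (\<lambda>s. Tset S s j)"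
    and e: "(\<lambda>(s, t). s(j := t)) p = (\<lambda>(s, t). s(j := t)) q"
  obtain s1 t1 where p1: "p = (s1, t1)" "s1 \<in> Vset S j" using p by auto
  obtain s2 t2 where q1: "q = (s2, t2)" "s2 \<in> Vset S j" using q by auto
  have e': "s1(j := t1) = s2(j := t2)" using e p1 q1 by simp
  have "t1 = t2" using fun_cong[OF e', of j] by simp
  moreover have "s1 = s2"
  proof
    fix v show "s1 v = s2 v"
    proof (cases "v = j")
      case True then show ?thesis using p1 q1 unfolding Vset_def by simp
    next
      case False then show ?thesis using fun_cong[OF e', of v] by simp
    qed
  qed
  ultimately show "p = q" using p1 q1 by simp
qed

lemma main_sum:
  assumes fS: "finite S" and n: "card S = n" and n1: "n \<ge> 1"
  shows "(\<Sum>s\<in>Vset S j. n ^ card (reps S s j)) \<le> 4 ^ (j * n) * n ^ n"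
proof (induction j)
  case 0
  show ?case using n by (simp add: V_zero reps_zero)
next
  case (Suc j)
  have fin: "finite (Vset S j)" by (rule V_finite[OF fS])
  have finT: "finite (Tset S s j)" for s
  proof (rule finite_subset[OF _ finite_permutations[OF fS]])
    show "Tset S s j \<subseteq> {p. p permutes S}" unfolding Tset_def by blast
  qed
  have inj: "inj_on (\<lambda>(s, t). s(j := t)) (Sigma (Vset S j) (\<lambda>s. Tset S s j))" by (rule V_inj)
  have "(\<Sum>s\<in>Vset S (Suc j). n ^ card (reps S s (Suc j)))
      = (\<Sum>p\<in>Sigma (Vset S j) (\<lambda>s. Tset S s j). n ^ card (reps S ((\<lambda>(s, t). s(j := t)) p) (Suc j)))"
    unfolding V_Suc using sum.reindex[OF inj, of "\<lambda>s. n ^ card (reps S s (Suc j))"]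
    by (simp add: comp_def)
  also have "\<dots> = (\<Sum>s\<in>Vset S j. \<Sum>t\<in>Tset S s j. n ^ card (reps S (s(j := t)) (Suc j)))"
    using sum.Sigma[OF fin, of "\<lambda>s. Tset S s j" "\<lambda>s t. n ^ card (reps S (s(j := t)) (Suc j))"] finT
    by (simp add: case_prod_beta split_def)
  also have "\<dots> \<le> (\<Sum>s\<in>Vset S j. 4 ^ n * n ^ card (reps S s j))"
  proof (rule sum_mono)
    fix s assume "s \<in> Vset S j"
    then have g: "good S s j" unfolding Vset_def by auto
    show "(\<Sum>t\<in>Tset S s j. n ^ card (reps S (s(j := t)) (Suc j))) \<le> 4 ^ n * n ^ card (reps S s j)"
      by (rule fiber_sum[OF g fS n n1])
  qed
  also have "\<dots> = 4 ^ n * (\<Sum>s\<in>Vset S j. n ^ card (reps S s j))" by (simp add: sum_distrib_left)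
  also have "\<dots> \<le> 4 ^ n * (4 ^ (j * n) * n ^ n)" using Suc.IH by simp
  also have "\<dots> = 4 ^ (Suc j * n) * n ^ n" by (simp add: power_add)
  finally show ?case .
qed

lemma lower: assumes g: "good S s j" and fS: "finite S"
  shows "card S \<le> card (reps S s j) * 2 ^ j"
proof -
  have fR: "finite (reps S s j)" using fS unfolding reps_def by auto
  have fO: "finite (orb s j b)" if "b \<in> reps S s j" for b
    using that orb_sub[OF g] fS finite_subset unfolding reps_def by blast
  have "S \<subseteq> (\<Union>b\<in>reps S s j. orb s j b)" using rep_exists[OF g fS] by blast
  then have "card S \<le> card (\<Union>b\<in>reps S s j. orb s j b)"
    by (rule card_mono[rotated]) (use fR fO in auto)
  also have "\<dots> \<le> (\<Sum>b\<in>reps S s j. card (orb s j b))" by (rule card_UN_le[OF fR])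
  also have "\<dots> \<le> (\<Sum>b\<in>reps S s j. 2 ^ j)"
    by (rule sum_mono) (use orb_card[OF g fS] in \<open>auto simp: reps_def\<close>)
  also have "\<dots> = card (reps S s j) * 2 ^ j" by simp
  finally show ?thesis .
qed


lemma count_eq: "racg_hom_count r complete_graph_adj n = card (Vset {1..n} r)"
  unfolding racg_hom_count_def Vset_def good_def complete_graph_adj_def by (simp add: conj_assoc)

theorem proposition3p3:
  fixes r n :: nat
  assumes "r \<ge> 1" and "n \<ge> 1"
  shows "real (racg_hom_count r complete_graph_adj n)
           \<le> 4 ^ (r * n) * real n ^ r * real n powr ((1 - 2 powr (- real r)) * real n)"
proof -
  let ?S = "{1..n}"
  let ?V = "Vset ?S r"
  have fS: "finite ?S" by simp
  have cS: "card ?S = n" by simp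
  have fV: "finite ?V" by (rule V_finite[OF fS])
  have n0: "real n > 0" using assms(2) by simp
  have n1: "real n \<ge> 1" using assms(2) by simp
  have key: "real n powr (real n / 2 ^ r) \<le> real (n ^ card (reps ?S s r))" if s: "s \<in> ?V" for s
  proof -
    have g: "good ?S s r" using s unfolding Vset_def by auto
    have "n \<le> card (reps ?S s r) * 2 ^ r" using lower[OF g fS] cS by simp
    then have "real n \<le> real (card (reps ?S s r)) * 2 ^ r" by (metis of_nat_le_iff of_nat_mult of_nat_numeral of_nat_power)
    then have le: "real n / 2 ^ r \<le> real (card (reps ?S s r))" by (simp add: divide_le_eq)
    have "real n powr (real n / 2 ^ r) \<le> real n powr real (card (reps ?S s r))"
      by (rule powr_mono[OF le n1])
    also have "\<dots> = real n ^ card (reps ?S s r)" by (rule powr_realpow[OF n0])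
    finally show ?thesis by simp
  qed
  have "real (card ?V) * real n powr (real n / 2 ^ r) = (\<Sum>s\<in>?V. real n powr (real n / 2 ^ r))"
    by simp
  also have "\<dots> \<le> (\<Sum>s\<in>?V. real (n ^ card (reps ?S s r)))" by (rule sum_mono) (rule key)
  also have "\<dots> = real (\<Sum>s\<in>?V. n ^ card (reps ?S s r))" by simp
  also have "\<dots> \<le> real (4 ^ (r * n) * n ^ n)"
    using main_sum[OF fS cS assms(2), of r] by (simp only: of_nat_le_iff)
  also have "\<dots> = 4 ^ (r * n) * real n powr (real n)"
    using powr_realpow[OF n0, of n] by simp
  finally have A: "real (card ?V) * real n powr (real n / 2 ^ r) \<le> 4 ^ (r * n) * real n powr (real n)" .
  have pos: "real n powr (real n / 2 ^ r) > 0" using n0 by simp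
  have "real n powr (real n) = real n powr ((1 - 2 powr (- real r)) * real n) * real n powr (real n / 2 ^ r)"
  proof -
    have "2 powr (- real r) = 1 / 2 ^ r" by (simp add: powr_minus powr_realpow divide_inverse)
    then have "(1 - 2 powr (- real r)) * real n + real n / 2 ^ r = real n" by (simp add: algebra_simps)
    then show ?thesis by (metis powr_add)
  qed
  then have "real (card ?V) * real n powr (real n / 2 ^ r)
      \<le> (4 ^ (r * n) * real n powr ((1 - 2 powr (- real r)) * real n)) * real n powr (real n / 2 ^ r)"
    using A by (simp add: mult.assoc)
  then have B: "real (card ?V) \<le> 4 ^ (r * n) * real n powr ((1 - 2 powr (- real r)) * real n)"
    using pos by (simp only: mult_le_cancel_right_pos)
  also have "\<dots> \<le> 4 ^ (r * n) * real n ^ r * real n powr ((1 - 2 powr (- real r)) * real n)"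
  proof -
    have "1 \<le> real n ^ r" using n1 by simp
    moreover have "0 \<le> real n powr ((1 - 2 powr (- real r)) * real n)" by simp
    ultimately have "real n powr ((1 - 2 powr (- real r)) * real n)
        \<le> real n ^ r * real n powr ((1 - 2 powr (- real r)) * real n)"
      by (metis mult_1 mult_right_mono)
    then show ?thesis by (simp add: mult.assoc)
  qed
  finally show ?thesis unfolding count_eq .
qed


end
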